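(* Let $([v_{ij}:v_{ji}])$ be common lines data for planes $P_1,\dots,P_N$ and fix a triple $(i,j,k)$ of distinct indices that strictly satisfies the spherical triangle inequalities. Then there exist frames $F_i,F_j,F_k$ in generic position which realize the common line pairs $[v_{ij}:v_{ji}]$, $[v_{ik}:v_{ki}]$, $[v_{jk}:v_{kj}]$, i.e. $\iota_i(v_{ij})=\iota_j(v_{ji})$, $\iota_i(v_{ik})=\iota_k(v_{ki})$, $\iota_j(v_{jk})=\iota_k(v_{kj})$. Moreover, if $G_i,G_j,G_k$ are any other frames realizing these same three pairs, then there is $A\in\mathrm O(3)$ with $(AF_i,AF_j,AF_k)=(G_i,G_j,G_k)$.
   Context: A frame is an ordered pair $(a,b)$ of orthonormal vectors in $\mathbb R^3$. Planes $P_1=\dots=P_N=\mathbb R^2$; a frame $F_i=(a_i,b_i)$ gives the embedding $\iota_i:P_i\to\mathbb R^3$, $\iota_i(x,y)=xa_i+yb_i$. Frames are in generic position if their planes $\iota(P)$ are pairwise distinct and the pairwise intersection lines are pairwise distinct. $\mathrm O(3)$ is the group of all $3\times3$ orthogonal matrices, acting on frames by $A(a,b)=(Aa,Ab)$. Common lines data is a collection $([v_{ij}:v_{ji}])_{1\le i<j\le N}$ of elements of $\mathbb P(P_i\times P_j)$ (nonzero pairs $(v_{ij},v_{ji})\in\mathbb R^2\times\mathbb R^2$ up to nonzero scaling) with $\|v_{ij}\|^2=\|v_{ji}\|^2$; indices of a pair may be written in either order. For a triple $(i,j,k)$ and chosen representatives set $\alpha_{ijk}=\cos^{-1}\frac{v_{ij}\cdot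 v_{ik}}{\|v_{ij}\|\|v_{ik}\|}$, $\beta_{ijk}=\cos^{-1}\frac{v_{ji}\cdot v_{jk}}{\|v_{ji}\|\|v_{jk}\|}$, $\gamma_{ijk}=\cos^{-1}\frac{v_{ki}\cdot v_{kj}}{\|v_{ki}\|\|v_{kj}\|}$. The triple strictly satisfies the spherical triangle inequalities if for any choice of representatives $\beta+\gamma>\alpha$, $\alpha+\gamma>\beta$, $\alpha+\beta>\gamma$, $\alpha+\beta+\gamma<2\pi$ (with $\alpha=\alpha_{ijk}$ etc.). *)

theory Defs
  imports "HOL-Analysis.Analysis"
begin

text \<open>Planes P_i = R^2 are modelled as real^2, ambient space R^3 as real^3.
  A frame is a pair (a,b) of orthonormal vectors in R^3.\<close>

type_synonym frame = "(real^3) \<times> (real^3)"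

definition is_frame :: "frame \<Rightarrow> bool" where
  "is_frame F \<longleftrightarrow> norm (fst F) = 1 \<and> norm (snd F) = 1 \<and> fst F \<bullet> snd F = 0"

definition iota :: "frame \<Rightarrow> real^2 \<Rightarrow> real^3" where
  "iota F p = (p$1) *\<^sub>R fst F + (p$2) *\<^sub>R snd F"

definition frame_plane :: "frame \<Rightarrow> (real^3) set" where
  "frame_plane F = range (iota F)"

definition generic_position :: "nat set \<Rightarrow> (nat \<Rightarrow> frame) \<Rightarrow> bool" where
  "generic_position I F \<longleftrightarrow>
     (\<forall>a\<in>I. \<forall>b\<in>I. a \<noteq> b \<longrightarrow> frame_plane (F a) \<noteq> frame_plane (F b)) \<and>
     (\<forall>a\<in>I. \<forall>b\<in>I. \<forall>c\<in>I. \<forall>d\<in>I. a \<noteq> b \<longrightarrow> c \<noteq> d \<longrightarrow> {a, b} \<noteq> {c, d} \<longrightarrow>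
        frame_plane (F a) \<inter> frame_plane (F b) \<noteq> frame_plane (F c) \<inter> frame_plane (F d))"

definition frame_act :: "real^3^3 \<Rightarrow> frame \<Rightarrow> frame" where
  "frame_act A F = (A *v fst F, A *v snd F)"

text \<open>Common lines data for planes P_1..P_N: v a b is the component v_ab of a chosen
  representative (v_ab, v_ba) of the class [v_ab : v_ba]; the pair is nonzero and
  both components have the same norm.\<close>
definition common_lines_data :: "nat \<Rightarrow> (nat \<Rightarrow> nat \<Rightarrow> real^2) \<Rightarrow> bool" where
  "common_lines_data N v \<longleftrightarrow>
     (\<forall>a\<in>{1..N}. \<forall>b\<in>{1..N}. a \<noteq> b \<longrightarrow>
        (v a b \<noteq> 0 \<or> v b a \<noteq> 0) \<and> norm (v a b) ^ 2 = norm (v b a) ^ 2)"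

definition vangle :: "real^2 \<Rightarrow> real^2 \<Rightarrow> real" where
  "vangle u w = arccos ((u \<bullet> w) / (norm u * norm w))"

text \<open>Strict spherical triangle inequalities for the triple (i,j,k), for every choice of
  representatives: the pair for {i,j} is rescaled by s, for {i,k} by t, for {j,k} by u.\<close>
definition strict_spherical_triangle ::
  "(nat \<Rightarrow> nat \<Rightarrow> real^2) \<Rightarrow> nat \<Rightarrow> nat \<Rightarrow> nat \<Rightarrow> bool" where
  "strict_spherical_triangle v i j k \<longleftrightarrow>
     (\<forall>s t u :: real. s \<noteq> 0 \<longrightarrow> t \<noteq> 0 \<longrightarrow> u \<noteq> 0 \<longrightarrow>
       (let \<alpha> = vangle (s *\<^sub>R v i j) (t *\<^sub>R v i k);
            \<beta> = vangle (s *\<^sub>R v j i) (u *\<^sub>R v j k);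
            \<gamma> = vangle (t *\<^sub>R v k i) (u *\<^sub>R v k j)
        in \<beta> + \<gamma> > \<alpha> \<and> \<alpha> + \<gamma> > \<beta> \<and> \<alpha> + \<beta> > \<gamma> \<and> \<alpha> + \<beta> + \<gamma> < 2 * pi))"

definition realizes_pair :: "(nat \<Rightarrow> frame) \<Rightarrow> (nat \<Rightarrow> nat \<Rightarrow> real^2) \<Rightarrow> nat \<Rightarrow> nat \<Rightarrow> bool" where
  "realizes_pair F v a b \<longleftrightarrow> iota (F a) (v a b) = iota (F b) (v b a)"

end

theory Submission imports Defs begin


definition det2 :: "real^2 \<Rightarrow> real^2 \<Rightarrow> real" where
  "det2 p q = p$1 * q$2 - p$2 * q$1"

lemma inner2: "(p::real^2) \<bullet> q = p$1*q$1 + p$2*q$2"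
  by (simp add: inner_vec_def sum_2)

lemma inner3: "(p::real^3) \<bullet> q = p$1*q$1 + p$2*q$2 + p$3*q$3"
  by (simp add: inner_vec_def sum_3)

lemma lagrange2: "(p \<bullet> q)^2 + (det2 p q)^2 = (p \<bullet> p) * (q \<bullet> q)"
  by (simp add: inner2 det2_def power2_eq_square algebra_simps)

lemma iota_inner:
  assumes "is_frame F"
  shows "iota F p \<bullet> iota F q = p \<bullet> q"
proof -
  have "fst F \<bullet> fst F = 1" "snd F \<bullet> snd F = 1" "fst F \<bullet> snd F = 0"
    using assms unfolding is_frame_def by (auto simp: norm_eq_1)
  moreover have "snd F \<bullet> fst F = 0" using calculation by (simp add: inner_commute)
  ultimately show ?thesis
    by (simp add: iota_def inner2 inner_add_left inner_add_right algebra_simps)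
qed

lemma frame_exists:
  assumes d: "det2 p q \<noteq> 0"
    and PP: "P \<bullet> P = p \<bullet> p" and QQ: "Q \<bullet> Q = q \<bullet> q" and PQ: "P \<bullet> Q = p \<bullet> q"
  shows "\<exists>F. is_frame F \<and> iota F p = P \<and> iota F q = Q \<and>
     (\<forall>z. \<exists>s t. iota F z = s *\<^sub>R P + t *\<^sub>R Q)"
proof -
  define d' where "d' = det2 p q"
  define A where "A = (1/d') *\<^sub>R (q$2 *\<^sub>R P - p$2 *\<^sub>R Q)"
  define B where "B = (1/d') *\<^sub>R (p$1 *\<^sub>R Q - q$1 *\<^sub>R P)"
  have d0: "d' \<noteq> 0" using d d'_def by simp
  have QP: "Q \<bullet> P = p \<bullet> q" using PQ by (simp add: inner_commute)
  have AA: "A \<bullet> A = 1"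
  proof -
    have "A \<bullet> A = (1/d')^2 * ((q$2)^2 * (P \<bullet> P) - 2 * q$2 * p$2 * (P \<bullet> Q) + (p$2)^2 * (Q \<bullet> Q))"
      unfolding A_def by (simp add: inner_diff_left inner_diff_right QP PQ power2_eq_square algebra_simps)
    also have "\<dots> = (1/d')^2 * d'^2"
      by (simp add: PP QQ PQ inner2 d'_def det2_def power2_eq_square algebra_simps)
    finally show ?thesis using d0 by (simp add: power2_eq_square)
  qed
  have BB: "B \<bullet> B = 1"
  proof -
    have "B \<bullet> B = (1/d')^2 * ((p$1)^2 * (Q \<bullet> Q) - 2 * q$1 * p$1 * (P \<bullet> Q) + (q$1)^2 * (P \<bullet> P))"
      unfolding B_def by (simp add: inner_diff_left inner_diff_right QP PQ power2_eq_square algebra_simps)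
    also have "\<dots> = (1/d')^2 * d'^2"
      by (simp add: PP QQ PQ inner2 d'_def det2_def power2_eq_square algebra_simps)
    finally show ?thesis using d0 by (simp add: power2_eq_square)
  qed
  have AB: "A \<bullet> B = 0"
  proof -
    have "A \<bullet> B = (1/d')^2 * (q$2 * p$1 * (P \<bullet> Q) - q$2*q$1 * (P \<bullet> P) - p$2*p$1*(Q \<bullet> Q) + p$2*q$1*(P \<bullet> Q))"
      unfolding A_def B_def by (simp add: inner_diff_left inner_diff_right QP PQ power2_eq_square algebra_simps)
    also have "\<dots> = 0"
      by (simp add: PP QQ PQ inner2 power2_eq_square algebra_simps)
    finally show ?thesis .
  qed
  define F where "F = (A, B)"
  have fr: "is_frame F" using AA BB AB by (simp add: F_def is_frame_def norm_eq_1)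
  have ip: "iota F p = P"
  proof -
    have "iota F p = (1/d') *\<^sub>R (d' *\<^sub>R P)"
      unfolding F_def iota_def A_def B_def d'_def det2_def by (simp add: algebra_simps)
    thus ?thesis using d0 by simp
  qed
  have iq: "iota F q = Q"
  proof -
    have "iota F q = (1/d') *\<^sub>R (d' *\<^sub>R Q)"
      unfolding F_def iota_def A_def B_def d'_def det2_def by (simp add: algebra_simps)
    thus ?thesis using d0 by simp
  qed
  have sp: "\<exists>s t. iota F z = s *\<^sub>R P + t *\<^sub>R Q" for z
    apply (rule exI[where x="(z$1 * q$2 - z$2 * q$1)/d'"])
    apply (rule exI[where x="(z$2 * p$1 - z$1 * p$2)/d'"])
    unfolding F_def iota_def A_def B_def by (simp add: algebra_simps diff_divide_distrib)
  show ?thesis using fr ip iq sp by blast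
qed

lemma iota_unique:
  assumes d: "det2 p q \<noteq> 0" and "iota F p = iota G p" and "iota F q = iota G q"
  shows "F = G"
proof -
  define X where "X = fst F - fst G"
  define Y where "Y = snd F - snd G"
  have e1: "p$1 *\<^sub>R X + p$2 *\<^sub>R Y = 0" using assms(2) unfolding X_def Y_def iota_def
    by (simp add: algebra_simps)
  have e2: "q$1 *\<^sub>R X + q$2 *\<^sub>R Y = 0" using assms(3) unfolding X_def Y_def iota_def
    by (simp add: algebra_simps)
  have "det2 p q *\<^sub>R X = q$2 *\<^sub>R (p$1 *\<^sub>R X + p$2 *\<^sub>R Y) - p$2 *\<^sub>R (q$1 *\<^sub>R X + q$2 *\<^sub>R Y)"
    by (simp add: det2_def algebra_simps)
  hence "X = 0" using e1 e2 d by simp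
  have "det2 p q *\<^sub>R Y = p$1 *\<^sub>R (q$1 *\<^sub>R X + q$2 *\<^sub>R Y) - q$1 *\<^sub>R (p$1 *\<^sub>R X + p$2 *\<^sub>R Y)"
    by (simp add: det2_def algebra_simps)
  hence "Y = 0" using e1 e2 d by simp
  show ?thesis using \<open>X = 0\<close> \<open>Y = 0\<close> unfolding X_def Y_def by (simp add: prod_eq_iff)
qed

lemma iota_act: "iota (frame_act A F) z = A *v iota F z"
  by (simp add: iota_def frame_act_def matrix_vector_right_distrib matrix_vector_mult_scaleR)



definition cols3 :: "real^3 \<Rightarrow> real^3 \<Rightarrow> real^3 \<Rightarrow> real^3^3" where
  "cols3 X1 X2 X3 = (\<chi> r c. (if c = 1 then X1 else if c = 2 then X2 else X3) $ r)"

lemma cols3_mult: "cols3 X1 X2 X3 *v axis 1 1 = X1" "cols3 X1 X2 X3 *v axis 2 1 = X2"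
   "cols3 X1 X2 X3 *v axis 3 1 = X3"
  by (simp_all add: matrix_vector_mult_basis column_def cols3_def vec_eq_iff)

lemma cols3_gram: "transpose (cols3 X1 X2 X3) ** cols3 X1 X2 X3 =
   (\<chi> r c. (if r = 1 then X1 else if r = 2 then X2 else X3) \<bullet> (if c = 1 then X1 else if c = 2 then X2 else X3))"
  by (simp add: vec_eq_iff matrix_matrix_mult_def transpose_def cols3_def inner3 sum_3)

lemma gram_orth:
  fixes X1 X2 X3 Y1 Y2 Y3 :: "real^3"
  assumes inv: "invertible (cols3 X1 X2 X3)"
    and g11: "Y1 \<bullet> Y1 = X1 \<bullet> X1" and g22: "Y2 \<bullet> Y2 = X2 \<bullet> X2" and g33: "Y3 \<bullet> Y3 = X3 \<bullet> X3"
    and g12: "Y1 \<bullet> Y2 = X1 \<bullet> X2" and g13: "Y1 \<bullet> Y3 = X1 \<bullet> X3" and g23: "Y2 \<bullet> Y3 = X2 \<bullet> X3"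
  shows "\<exists>A. orthogonal_matrix A \<and> A *v X1 = Y1 \<and> A *v X2 = Y2 \<and> A *v X3 = Y3"
proof -
  define X where "X = cols3 X1 X2 X3"
  define Y where "Y = cols3 Y1 Y2 Y3"
  obtain Xi where Xi: "X ** Xi = mat 1" "Xi ** X = mat 1" using inv unfolding invertible_def X_def by blast
  have G: "transpose Y ** Y = transpose X ** X"
    unfolding X_def Y_def cols3_gram
    by (simp add: vec_eq_iff forall_3 g11 g22 g33 g12 g13 g23 inner_commute)
  define A where "A = Y ** Xi"
  have "transpose A ** A = transpose Xi ** (transpose Y ** Y) ** Xi"
    by (simp add: A_def matrix_transpose_mul matrix_mul_assoc)
  also have "\<dots> = transpose (X ** Xi) ** (X ** Xi)"
    by (simp add: G matrix_transpose_mul matrix_mul_assoc)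
  also have "\<dots> = mat 1" by (simp add: Xi transpose_mat)
  finally have o: "orthogonal_matrix A" by (simp add: orthogonal_matrix)
  have m: "A *v (X *v e) = Y *v e" for e
    by (simp add: A_def matrix_vector_mul_assoc flip: matrix_mul_assoc add: Xi)
  show ?thesis
    apply (rule exI[of _ A])
    using o m[of "axis 1 1"] m[of "axis 2 1"] m[of "axis 3 1"]
    by (simp add: X_def Y_def cols3_mult)
qed



lemma vangle_facts:
  assumes "u \<noteq> 0" "w \<noteq> 0"
  shows "0 \<le> vangle u w" "vangle u w \<le> pi" "cos (vangle u w) * (norm u * norm w) = u \<bullet> w"
proof -
  have np: "norm u * norm w > 0" using assms by simp
  have "\<bar>u \<bullet> w\<bar> \<le> norm u * norm w" by (rule Cauchy_Schwarz_ineq2)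
  hence b: "-1 \<le> (u \<bullet> w) / (norm u * norm w)" "(u \<bullet> w) / (norm u * norm w) \<le> 1"
    using np by (auto simp: divide_simps abs_le_iff)
  show "0 \<le> vangle u w" "vangle u w \<le> pi" unfolding vangle_def
    using b arccos_lbound arccos_ubound by auto
  show "cos (vangle u w) * (norm u * norm w) = u \<bullet> w" unfolding vangle_def
    using b np by (simp add: cos_arccos)
qed

lemma trig_key:
  fixes \<alpha> \<beta> \<gamma> :: real
  assumes "0 < \<alpha>" "\<alpha> < pi" "0 < \<beta>" "\<beta> < pi" "0 \<le> \<gamma>" "\<gamma> \<le> pi"
    and "\<beta> + \<gamma> > \<alpha>" "\<alpha> + \<gamma> > \<beta>" "\<alpha> + \<beta> > \<gamma>" "\<alpha> + \<beta> + \<gamma> < 2*pi"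
  shows "(cos \<gamma> - cos \<alpha> * cos \<beta>)^2 < (sin \<alpha> * sin \<beta>)^2"
proof -
  have sp: "sin \<alpha> * sin \<beta> > 0" using assms by (simp add: sin_gt_zero)
  have up: "cos \<gamma> < cos \<bar>\<alpha> - \<beta>\<bar>"
    using assms by (subst cos_mono_less_eq) auto
  hence u: "cos \<gamma> - cos \<alpha> * cos \<beta> < sin \<alpha> * sin \<beta>"
    by (simp add: cos_diff)
  have lo: "cos (\<alpha> + \<beta>) < cos \<gamma>"
  proof (cases "\<alpha> + \<beta> \<le> pi")
    case True thus ?thesis using assms by (subst cos_mono_less_eq) auto
  next
    case False
    have "cos (\<alpha> + \<beta>) = cos (2*pi - (\<alpha> + \<beta>))" by (simp add: cos_diff)
    also have "\<dots> < cos \<gamma>" using assms False by (subst cos_mono_less_eq) auto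
    finally show ?thesis .
  qed
  hence l: "- (sin \<alpha> * sin \<beta>) < cos \<gamma> - cos \<alpha> * cos \<beta>" by (simp add: cos_add)
  have h: "\<bar>cos \<gamma> - cos \<alpha> * cos \<beta>\<bar> < \<bar>sin \<alpha> * sin \<beta>\<bar>" using u l sp by auto
  have "\<bar>cos \<gamma> - cos \<alpha> * cos \<beta>\<bar>^2 < \<bar>sin \<alpha> * sin \<beta>\<bar>^2"
    by (rule power_strict_mono[OF h]) auto
  thus ?thesis by simp
qed



lemma det2_nz:
  assumes "u \<noteq> 0" "w \<noteq> 0" "0 < vangle u w" "vangle u w < pi"
  shows "det2 u w \<noteq> 0"
proof
  assume d: "det2 u w = 0"
  have c: "cos (vangle u w) * (norm u * norm w) = u \<bullet> w" using vangle_facts assms by blast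
  have "(u \<bullet> w)^2 = (u \<bullet> u) * (w \<bullet> w)" using lagrange2[of u w] d by simp
  also have "\<dots> = (norm u * norm w)^2" by (simp add: power2_norm_eq_inner[symmetric] power_mult_distrib)
  finally have "(cos (vangle u w))^2 * (norm u * norm w)^2 = 1 * (norm u * norm w)^2"
    using c by (metis mult_1 power_mult_distrib)
  hence "(cos (vangle u w))^2 = 1" using assms by simp
  hence "(sin (vangle u w))^2 = 0" by (simp add: sin_squared_eq)
  moreover have "sin (vangle u w) > 0" using assms by (simp add: sin_gt_zero)
  ultimately show False by simp
qed



theorem proposition1:
  fixes N :: nat and v :: "nat \<Rightarrow> nat \<Rightarrow> real^2" and i j k :: nat
  assumes "common_lines_data N v"
    and "i \<in> {1..N}" and "j \<in> {1..N}" and "k \<in> {1..N}"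
    and "i \<noteq> j" and "i \<noteq> k" and "j \<noteq> k"
    and "strict_spherical_triangle v i j k"
  shows "\<exists>F :: nat \<Rightarrow> frame.
           is_frame (F i) \<and> is_frame (F j) \<and> is_frame (F k) \<and>
           generic_position {i, j, k} F \<and>
           realizes_pair F v i j \<and> realizes_pair F v i k \<and> realizes_pair F v j k \<and>
           (\<forall>G :: nat \<Rightarrow> frame.
              is_frame (G i) \<and> is_frame (G j) \<and> is_frame (G k) \<and>
              realizes_pair G v i j \<and> realizes_pair G v i k \<and> realizes_pair G v j k \<longrightarrow>
              (\<exists>A :: real^3^3. orthogonal_matrix A \<and>
                 frame_act A (F i) = G i \<and> frame_act A (F j) = G j \<and> frame_act A (F k) = G k))"
proof -
  define pij where "pij = v i j"
  define pik where "pik = v i k"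
  define pji where "pji = v j i"
  define pjk where "pjk = v j k"
  define pki where "pki = v k i"
  define pkj where "pkj = v k j"
  have cl: "\<And>a b. a \<in> {1..N} \<Longrightarrow> b \<in> {1..N} \<Longrightarrow> a \<noteq> b \<Longrightarrow>
      v a b \<noteq> 0 \<and> v b a \<noteq> 0 \<and> norm (v a b) = norm (v b a)"
  proof -
    fix a b assume h: "a \<in> {1..N}" "b \<in> {1..N}" "a \<noteq> b"
    have "(v a b \<noteq> 0 \<or> v b a \<noteq> 0) \<and> norm (v a b) ^ 2 = norm (v b a) ^ 2"
      using assms(1) h unfolding common_lines_data_def by blast
    moreover hence "norm (v a b) = norm (v b a)" using power2_eq_imp_eq by fastforce
    ultimately show "v a b \<noteq> 0 \<and> v b a \<noteq> 0 \<and> norm (v a b) = norm (v b a)" by auto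
  qed
  have c1: "pij \<noteq> 0" "pji \<noteq> 0" "norm pji = norm pij"
    using cl[OF assms(2,3,5)] unfolding pij_def pji_def by auto
  have c2: "pik \<noteq> 0" "pki \<noteq> 0" "norm pki = norm pik"
    using cl[OF assms(2,4,6)] unfolding pik_def pki_def by auto
  have c3: "pjk \<noteq> 0" "pkj \<noteq> 0" "norm pkj = norm pjk"
    using cl[OF assms(3,4,7)] unfolding pjk_def pkj_def by auto
  define a where "a = norm pij"
  define b where "b = norm pik"
  define c where "c = norm pjk"
  have abc: "a > 0" "b > 0" "c > 0" using c1 c2 c3 unfolding a_def b_def c_def by auto
  define \<alpha> where "\<alpha> = vangle pij pik"
  define \<beta> where "\<beta> = vangle pji pjk"
  define \<gamma> where "\<gamma> = vangle pki pkj"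
  have ineq: "\<beta> + \<gamma> > \<alpha>" "\<alpha> + \<gamma> > \<beta>" "\<alpha> + \<beta> > \<gamma>" "\<alpha> + \<beta> + \<gamma> < 2 * pi"
    using assms(8) unfolding strict_spherical_triangle_def
    by (auto dest!: spec[of _ 1] simp: Let_def \<alpha>_def \<beta>_def \<gamma>_def pij_def pik_def pji_def pjk_def pki_def pkj_def)
  have ra: "0 \<le> \<alpha>" "\<alpha> \<le> pi" "cos \<alpha> * (a * b) = pij \<bullet> pik"
    using vangle_facts[OF c1(1) c2(1)] unfolding \<alpha>_def a_def b_def by auto
  have rb: "0 \<le> \<beta>" "\<beta> \<le> pi" "cos \<beta> * (a * c) = pji \<bullet> pjk"
    using vangle_facts[OF c1(2) c3(1)] c1(3) unfolding \<beta>_def a_def c_def by auto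
  have rg: "0 \<le> \<gamma>" "\<gamma> \<le> pi" "cos \<gamma> * (b * c) = pki \<bullet> pkj"
    using vangle_facts[OF c2(2) c3(2)] c2(3) c3(3) unfolding \<gamma>_def b_def c_def by auto
  have strict: "0 < \<alpha>" "\<alpha> < pi" "0 < \<beta>" "\<beta> < pi" "0 < \<gamma>" "\<gamma> < pi"
    using ineq ra rb rg by linarith+
  have d1: "det2 pij pik \<noteq> 0" using det2_nz[OF c1(1) c2(1)] strict unfolding \<alpha>_def by auto
  have d2: "det2 pji pjk \<noteq> 0" using det2_nz[OF c1(2) c3(1)] strict unfolding \<beta>_def by auto
  have d3: "det2 pki pkj \<noteq> 0" using det2_nz[OF c2(2) c3(2)] strict unfolding \<gamma>_def by auto
  define sa where "sa = sin \<alpha>"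
  define sb where "sb = sin \<beta>"
  have sab: "sa > 0" "sb > 0" using strict by (auto simp: sa_def sb_def sin_gt_zero)
  define x where "x = (cos \<gamma> - cos \<alpha> * cos \<beta>) / sa"
  have sx: "sa * x = cos \<gamma> - cos \<alpha> * cos \<beta>" using sab by (simp add: x_def)
  have "(sa * x)^2 < (sa * sb)^2" unfolding sx
    using trig_key[of \<alpha> \<beta> \<gamma>] strict ineq by (auto simp: sa_def sb_def)
  hence "sa^2 * x^2 < sa^2 * sb^2" by (simp add: power_mult_distrib)
  hence xlt: "x^2 < sb^2" using sab by simp
  define y where "y = sqrt (sb^2 - x^2)"
  have y: "y > 0" "y^2 = sb^2 - x^2" using xlt by (auto simp: y_def)
  define L1 where "L1 = (vector [a, 0, 0] :: real^3)"
  define L2 where "L2 = (vector [b * cos \<alpha>, b * sa, 0] :: real^3)"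
  define L3 where "L3 = (vector [c * cos \<beta>, c * x, c * y] :: real^3)"
  have sca: "sa^2 + (cos \<alpha>)^2 = 1" by (simp add: sa_def)
  have scb: "sb^2 + (cos \<beta>)^2 = 1" by (simp add: sb_def)
  have nij: "pij \<bullet> pij = a^2" "pji \<bullet> pji = a^2" using c1 by (simp_all add: a_def power2_norm_eq_inner[symmetric])
  have nik: "pik \<bullet> pik = b^2" "pki \<bullet> pki = b^2" using c2 by (simp_all add: b_def power2_norm_eq_inner[symmetric])
  have njk: "pjk \<bullet> pjk = c^2" "pkj \<bullet> pkj = c^2" using c3 by (simp_all add: c_def power2_norm_eq_inner[symmetric])
  have L11: "L1 \<bullet> L1 = a^2" by (simp add: L1_def inner3 power2_eq_square)
  have L22: "L2 \<bullet> L2 = b^2"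
  proof -
    have "L2 \<bullet> L2 = b^2 * (sa^2 + (cos \<alpha>)^2)" by (simp add: L2_def inner3 power2_eq_square algebra_simps)
    thus ?thesis using sca by simp
  qed
  have L33: "L3 \<bullet> L3 = c^2"
  proof -
    have "L3 \<bullet> L3 = c^2 * ((cos \<beta>)^2 + x^2 + y^2)" by (simp add: L3_def inner3 power2_eq_square algebra_simps)
    thus ?thesis using scb y by simp
  qed
  have L12: "L1 \<bullet> L2 = pij \<bullet> pik" using ra by (simp add: L1_def L2_def inner3 algebra_simps)
  have L13: "L1 \<bullet> L3 = pji \<bullet> pjk" using rb by (simp add: L1_def L3_def inner3 algebra_simps)
  have L23: "L2 \<bullet> L3 = pki \<bullet> pkj"
  proof -
    have "L2 \<bullet> L3 = b * c * (cos \<alpha> * cos \<beta> + sa * x)" by (simp add: L2_def L3_def inner3 algebra_simps)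
    also have "\<dots> = cos \<gamma> * (b * c)" using sx by (simp add: algebra_simps)
    finally show ?thesis using rg by simp
  qed
  obtain Fi where Fi: "is_frame Fi" "iota Fi pij = L1" "iota Fi pik = L2"
      "\<forall>z. \<exists>s t. iota Fi z = s *\<^sub>R L1 + t *\<^sub>R L2"
    using frame_exists[OF d1, of L1 L2] L11 L22 L12 nij nik by auto
  obtain Fj where Fj: "is_frame Fj" "iota Fj pji = L1" "iota Fj pjk = L3"
      "\<forall>z. \<exists>s t. iota Fj z = s *\<^sub>R L1 + t *\<^sub>R L3"
    using frame_exists[OF d2, of L1 L3] L11 L33 L13 nij njk by auto
  obtain Fk where Fk: "is_frame Fk" "iota Fk pki = L2" "iota Fk pkj = L3"
      "\<forall>z. \<exists>s t. iota Fk z = s *\<^sub>R L2 + t *\<^sub>R L3"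
    using frame_exists[OF d3, of L2 L3] L22 L33 L23 nik njk by auto
  define F where "F = (\<lambda>n. if n = i then Fi else if n = j then Fj else Fk)"
  have Fv: "F i = Fi" "F j = Fj" "F k = Fk" using assms(5,6,7) by (auto simp: F_def)
  have m1: "L1 \<in> frame_plane Fi" "L1 \<in> frame_plane Fj" "L2 \<in> frame_plane Fi"
    "L2 \<in> frame_plane Fk" "L3 \<in> frame_plane Fj" "L3 \<in> frame_plane Fk"
    unfolding frame_plane_def using Fi Fj Fk by (metis rangeI)+
  have n1: "L3 \<notin> frame_plane Fi"
  proof
    assume "L3 \<in> frame_plane Fi"
    then obtain s t where "L3 = s *\<^sub>R L1 + t *\<^sub>R L2" using Fi(4) unfolding frame_plane_def by (metis rangeE)
    hence "L3 $ 3 = (s *\<^sub>R L1 + t *\<^sub>R L2) $ 3" by simp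
    thus False using abc y by (simp add: L1_def L2_def L3_def)
  qed
  have n2: "L2 \<notin> frame_plane Fj"
  proof
    assume "L2 \<in> frame_plane Fj"
    then obtain s t where e: "L2 = s *\<^sub>R L1 + t *\<^sub>R L3" using Fj(4) unfolding frame_plane_def by (metis rangeE)
    hence "L2 $ 3 = (s *\<^sub>R L1 + t *\<^sub>R L3) $ 3" by simp
    hence "t = 0" using abc y by (simp add: L1_def L2_def L3_def)
    moreover have "L2 $ 2 = (s *\<^sub>R L1 + t *\<^sub>R L3) $ 2" using e by simp
    ultimately show False using abc sab by (simp add: L1_def L2_def L3_def)
  qed
  have n3: "L1 \<notin> frame_plane Fk"
  proof
    assume "L1 \<in> frame_plane Fk"
    then obtain s t where e: "L1 = s *\<^sub>R L2 + t *\<^sub>R L3" using Fk(4) unfolding frame_plane_def by (metis rangeE)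
    hence "L1 $ 3 = (s *\<^sub>R L2 + t *\<^sub>R L3) $ 3" by simp
    hence t: "t = 0" using abc y by (simp add: L1_def L2_def L3_def)
    have "L1 $ 2 = (s *\<^sub>R L2 + t *\<^sub>R L3) $ 2" using e by simp
    hence s: "s = 0" using t abc sab by (simp add: L1_def L2_def L3_def)
    have "L1 $ 1 = (s *\<^sub>R L2 + t *\<^sub>R L3) $ 1" using e by simp
    thus False using s t abc by (simp add: L1_def L2_def L3_def)
  qed
  have gp: "generic_position {i, j, k} F"
  proof -
    let ?Pi = "frame_plane Fi" and ?Pj = "frame_plane Fj" and ?Pk = "frame_plane Fk"
    have p: "?Pi \<noteq> ?Pj" "?Pi \<noteq> ?Pk" "?Pj \<noteq> ?Pk" using m1 n1 n2 n3 by blast+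
    have q: "?Pi \<inter> ?Pj \<noteq> ?Pi \<inter> ?Pk" "?Pi \<inter> ?Pj \<noteq> ?Pj \<inter> ?Pk" "?Pi \<inter> ?Pk \<noteq> ?Pj \<inter> ?Pk"
      using m1 n1 n2 n3 by blast+
    show ?thesis unfolding generic_position_def Fv[symmetric]
      using p q assms(5,6,7) unfolding Fv[symmetric]
      by (auto simp: Int_commute)
  qed
  have real: "realizes_pair F v i j" "realizes_pair F v i k" "realizes_pair F v j k"
    unfolding realizes_pair_def Fv using Fi Fj Fk
    by (simp_all add: pij_def pik_def pji_def pjk_def pki_def pkj_def)
  have invL: "invertible (cols3 L1 L2 L3)"
    using abc sab y by (simp add: invertible_det_nz det_3 cols3_def L1_def L2_def L3_def)
  have uniq: "\<exists>A :: real^3^3. orthogonal_matrix A \<and>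
                 frame_act A (F i) = G i \<and> frame_act A (F j) = G j \<and> frame_act A (F k) = G k"
    if G: "is_frame (G i)" "is_frame (G j)" "is_frame (G k)"
      "realizes_pair G v i j" "realizes_pair G v i k" "realizes_pair G v j k" for G
  proof -
    define M1 where "M1 = iota (G i) pij"
    define M2 where "M2 = iota (G i) pik"
    define M3 where "M3 = iota (G j) pjk"
    have r: "iota (G j) pji = M1" "iota (G k) pki = M2" "iota (G k) pkj = M3"
      using G(4-6) unfolding realizes_pair_def M1_def M2_def M3_def
      by (simp_all add: pij_def pik_def pji_def pjk_def pki_def pkj_def)
    have g11: "M1 \<bullet> M1 = L1 \<bullet> L1" unfolding M1_def iota_inner[OF G(1)] L11 nij ..
    have g22: "M2 \<bullet> M2 = L2 \<bullet> L2" unfolding M2_def iota_inner[OF G(1)] L22 nik ..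
    have g33: "M3 \<bullet> M3 = L3 \<bullet> L3" unfolding M3_def iota_inner[OF G(2)] L33 njk ..
    have g12: "M1 \<bullet> M2 = L1 \<bullet> L2" unfolding M1_def M2_def iota_inner[OF G(1)] L12 ..
    have g13: "M1 \<bullet> M3 = L1 \<bullet> L3" unfolding r(1)[symmetric] M3_def iota_inner[OF G(2)] L13 ..
    have g23: "M2 \<bullet> M3 = L2 \<bullet> L3" unfolding r(2,3)[symmetric] iota_inner[OF G(3)] L23 ..
    obtain A where A: "orthogonal_matrix A" "A *v L1 = M1" "A *v L2 = M2" "A *v L3 = M3"
      using gram_orth[OF invL g11 g22 g33 g12 g13 g23] by blast
    have "frame_act A Fi = G i"
      by (rule iota_unique[OF d1]) (simp_all add: iota_act Fi A M1_def M2_def)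
    moreover have "frame_act A Fj = G j"
      by (rule iota_unique[OF d2]) (simp_all add: iota_act Fj A r M3_def)
    moreover have "frame_act A Fk = G k"
      by (rule iota_unique[OF d3]) (simp_all add: iota_act Fk A r)
    ultimately show ?thesis using A(1) Fv by auto
  qed
  show ?thesis
    apply (rule exI[of _ F])
    using Fi(1) Fj(1) Fk(1) Fv gp real uniq by auto
qed

end
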